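(* Let $G$ be a group generated by $x_1,\dots,x_n$, with finite commutator subgroup $C=[G,G]$, such that $G/C$ is free abelian of rank $n$ with basis the images of $x_1,\dots,x_n$. Let $P=X\cap\mathcal C_G(C)$, where $X=\{g_{\mathbf m}\in T: c_{\,x_1^{m_1}\cdots x_{k-1}^{m_{k-1}},\,x_k}=e \text{ for all } k=1,\dots,n\}$ and $\mathcal C_G(C)$ is the centralizer of $C$ in $G$. If $p\in P$, then $t\,p=(t\,p)^{ab}$ for every $t\in T$; that is, $g_{\mathbf r}\,g_{\mathbf m}=g_{\mathbf r+\mathbf m}$ whenever $g_{\mathbf m}\in P$ and $\mathbf r\in\mathbb Z^n$.
   Context: Notation: $\bar g=g^{-1}$, $c_{gh}=\bar g\,\bar h\,g\,h$. For $\mathbf r\in\mathbb Z^n$, $g_{\mathbf r}=x_1^{r_1}\cdots x_n^{r_n}$, and $T=\{g_{\mathbf r}\}$. Every $g\in G$ decomposes uniquely as $g=g_{\mathbf r}c$ with $c\in C$, and $g^{ab}$ denotes the element $g_{\mathbf r}$ of this decomposition. *)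

theory Defs
  imports "HOL-Algebra.Algebra"
begin

definition comm :: "('a, 'b) monoid_scheme \<Rightarrow> 'a \<Rightarrow> 'a \<Rightarrow> 'a" where
  "comm G g h = inv\<^bsub>G\<^esub> g \<otimes>\<^bsub>G\<^esub> inv\<^bsub>G\<^esub> h \<otimes>\<^bsub>G\<^esub> g \<otimes>\<^bsub>G\<^esub> h"

text \<open>Ordered product x_0^{r_0} ... x_{k-1}^{r_{k-1}} (generators indexed from 0);
  gprod G x k r for k = n is g_r.\<close>
fun gprod :: "('a, 'b) monoid_scheme \<Rightarrow> (nat \<Rightarrow> 'a) \<Rightarrow> nat \<Rightarrow> (nat \<Rightarrow> int) \<Rightarrow> 'a" where
  "gprod G x 0 r = \<one>\<^bsub>G\<^esub>"
| "gprod G x (Suc k) r = gprod G x k r \<otimes>\<^bsub>G\<^esub> (x k [^]\<^bsub>G\<^esub> r k)"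

definition centralizer :: "('a, 'b) monoid_scheme \<Rightarrow> 'a set \<Rightarrow> 'a set" where
  "centralizer G S = {g \<in> carrier G. \<forall>s\<in>S. g \<otimes>\<^bsub>G\<^esub> s = s \<otimes>\<^bsub>G\<^esub> g}"

definition Tset :: "('a, 'b) monoid_scheme \<Rightarrow> (nat \<Rightarrow> 'a) \<Rightarrow> nat \<Rightarrow> 'a set" where
  "Tset G x n = {gprod G x n r | r. True}"

definition Xset :: "('a, 'b) monoid_scheme \<Rightarrow> (nat \<Rightarrow> 'a) \<Rightarrow> nat \<Rightarrow> 'a set" where
  "Xset G x n = {gprod G x n m | m. \<forall>k<n. comm G (gprod G x k m) (x k) = \<one>\<^bsub>G\<^esub>}"

definition Pset :: "('a, 'b) monoid_scheme \<Rightarrow> (nat \<Rightarrow> 'a) \<Rightarrow> nat \<Rightarrow> 'a set" where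
  "Pset G x n = Xset G x n \<inter> centralizer G (derived G (carrier G))"

end

theory Submission
  imports Defs
begin

lemma gprod_cong: "(\<forall>i<k. r i = s i) \<Longrightarrow> gprod G x k r = gprod G x k s"
  by (induction k) auto

lemma (in group) gprod_closed:
  "x ` {..<n} \<subseteq> carrier G \<Longrightarrow> k \<le> n \<Longrightarrow> gprod G x k r \<in> carrier G"
  by (induction k) (auto simp: image_subset_iff)

lemma (in group) comm_int_pow:
  assumes "a \<otimes> y = y \<otimes> a" "a \<in> carrier G" "y \<in> carrier G"
  shows "a \<otimes> y [^] (i::int) = y [^] i \<otimes> a"
proof -
  have n: "a \<otimes> y [^] (k::nat) = y [^] k \<otimes> a" for k
    using group_commutes_pow[of y a k] assms by simp
  have iv: "a \<otimes> inv (y [^] k) = inv (y [^] k) \<otimes> a" for k :: nat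
  proof -
    have w: "y [^] k \<in> carrier G" using assms by simp
    have "a \<otimes> inv (y [^] k) = inv (y [^] k) \<otimes> (y [^] k \<otimes> a) \<otimes> inv (y [^] k)"
      using w assms by (simp add: m_assoc[symmetric])
    also have "\<dots> = inv (y [^] k) \<otimes> (a \<otimes> y [^] k) \<otimes> inv (y [^] k)" using n by simp
    also have "\<dots> = inv (y [^] k) \<otimes> a" using w assms by (simp add: m_assoc)
    finally show ?thesis .
  qed
  have "y [^] i = inv (y [^] nat (-i)) \<or> y [^] i = y [^] nat i"
    unfolding int_pow_def2 by (cases "i < 0") auto
  thus ?thesis using n iv by metis
qed

lemma (in group) inv_cancel_left':
  "x \<in> carrier G \<Longrightarrow> z \<in> carrier G \<Longrightarrow> x \<otimes> (inv x \<otimes> z) = z"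
  by (simp add: m_assoc[symmetric])

lemma (in group) comm_one_imp:
  assumes "comm G a y = \<one>" "a \<in> carrier G" "y \<in> carrier G"
  shows "a \<otimes> y = y \<otimes> a"
proof -
  have "(y \<otimes> a) \<otimes> comm G a y = a \<otimes> y"
    using assms(2,3) unfolding comm_def by (simp add: m_assoc inv_cancel_left')
  hence "y \<otimes> a = a \<otimes> y" using assms by (simp only: r_one m_closed)
  thus ?thesis by (rule sym)
qed

lemma (in group) main_mult:
  assumes gens: "x ` {..<n} \<subseteq> carrier G"
    and c: "\<forall>j<n. comm G (gprod G x j m) (x j) = \<one>"
  shows "k \<le> n \<Longrightarrow> gprod G x k r \<otimes> gprod G x k m = gprod G x k (\<lambda>i. r i + m i)"
proof (induction k)
  case 0 then show ?case by simp
next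
  case (Suc k)
  have xk: "x k \<in> carrier G" using gens Suc by auto
  have A: "gprod G x k r \<in> carrier G" "gprod G x k m \<in> carrier G"
    using gprod_closed[OF gens] Suc by auto
  have cm: "gprod G x k m \<otimes> x k = x k \<otimes> gprod G x k m"
    using comm_one_imp[OF _ A(2) xk] c Suc by auto
  have P1: "x k [^] r k \<in> carrier G" "x k [^] m k \<in> carrier G" using xk by auto
  have "gprod G x (Suc k) r \<otimes> gprod G x (Suc k) m =
        gprod G x k r \<otimes> (x k [^] r k \<otimes> gprod G x k m) \<otimes> x k [^] m k"
    using A P1 by (simp only: gprod.simps m_assoc m_closed)
  also have "\<dots> = gprod G x k r \<otimes> (gprod G x k m \<otimes> x k [^] r k) \<otimes> x k [^] m k"
    using comm_int_pow[OF cm A(2) xk, of "r k"] by (simp only:)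
  also have "\<dots> = (gprod G x k r \<otimes> gprod G x k m) \<otimes> (x k [^] r k \<otimes> x k [^] m k)"
    using A P1 by (simp only: m_assoc m_closed)
  also have "\<dots> = gprod G x (Suc k) (\<lambda>i. r i + m i)"
    using Suc int_pow_mult[OF xk, of "r k" "m k"] by simp
  finally show ?case .
qed

lemma (in group) quot_diff:
  assumes gens: "x ` {..<n} \<subseteq> carrier G"
  defines "D \<equiv> derived G (carrier G)"
  shows "k \<le> n \<Longrightarrow> (D #> gprod G x k (\<lambda>i. a i - b i)) \<otimes>\<^bsub>G Mod D\<^esub> (D #> gprod G x k b)
     = D #> gprod G x k a"
proof (induction k)
  interpret N: normal D G unfolding D_def by (rule derived_self_is_normal)
  interpret Q: comm_group "G Mod D" unfolding D_def by (rule derived_quot_is_comm_group)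
  have hom: "(\<lambda>g. D #> g) \<in> hom G (G Mod D)" by (rule N.r_coset_hom_Mod)
  have grpQ: "group (G Mod D)" by (rule Q.is_group)
  {
  case 0
  show ?case using Q.l_one[OF Q.one_closed] N.subset by simp
  next
  case (Suc k)
  have xk: "x k \<in> carrier G" using gens Suc by auto
  have A: "gprod G x k (\<lambda>i. a i - b i) \<in> carrier G" "gprod G x k b \<in> carrier G"
    using gprod_closed[OF gens] Suc by auto
  have hm: "\<And>u v. u \<in> carrier G \<Longrightarrow> v \<in> carrier G \<Longrightarrow> D #> (u \<otimes> v) = (D #> u) \<otimes>\<^bsub>G Mod D\<^esub> (D #> v)"
    using hom by (simp add: hom_mult)
  have hp: "\<And>i::int. D #> (x k [^] i) = (D #> x k) [^]\<^bsub>G Mod D\<^esub> i"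
    using hom_int_pow[OF hom xk group_axioms grpQ] by simp
  have cl: "\<And>u. u \<in> carrier G \<Longrightarrow> D #> u \<in> carrier (G Mod D)"
    using hom by (auto simp: hom_def)
  have xq: "D #> x k \<in> carrier (G Mod D)" using cl xk by simp
  let ?M = "\<lambda>u v. u \<otimes>\<^bsub>G Mod D\<^esub> v"
  let ?P = "\<lambda>i::int. (D #> x k) [^]\<^bsub>G Mod D\<^esub> i"
  let ?U = "D #> gprod G x k (\<lambda>i. a i - b i)"
  let ?V = "D #> gprod G x k b"
  have U: "?U \<in> carrier (G Mod D)" "?V \<in> carrier (G Mod D)" using cl A by auto
  have Pc: "\<And>i. ?P i \<in> carrier (G Mod D)" using xq by simp
  have "(D #> gprod G x (Suc k) (\<lambda>i. a i - b i)) \<otimes>\<^bsub>G Mod D\<^esub> (D #> gprod G x (Suc k) b)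
     = ?M (?M ?U (?P (a k - b k))) (?M ?V (?P (b k)))"
    using A xk by (simp only: gprod.simps hm int_pow_closed hp)
  also have "\<dots> = ?M (?M ?U ?V) (?M (?P (a k - b k)) (?P (b k)))"
    using U Pc by (simp only: Q.m_assoc Q.m_closed U Pc Q.m_lcomm[of "?P (a k - b k)" ?V "?P (b k)"])
  also have "\<dots> = ?M (D #> gprod G x k a) (?P (a k))"
    using Suc xq Q.int_pow_mult[OF xq, of "a k - b k" "b k"] by simp
  also have "\<dots> = D #> gprod G x (Suc k) a"
    using xk gprod_closed[OF gens, of k a] Suc by (simp only: gprod.simps hm int_pow_closed hp)
  finally show ?case .
  }
qed

theorem lemma2:
  fixes G (structure) and x :: "nat \<Rightarrow> 'a" and n :: nat
  assumes grp: "group G"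
    and gens: "x ` {..<n} \<subseteq> carrier G"
    and gen: "carrier G = generate G (x ` {..<n})"
    and finC: "finite (derived G (carrier G))"
    and basis: "\<And>r :: nat \<Rightarrow> int. gprod G x n r \<in> derived G (carrier G) \<Longrightarrow> \<forall>i<n. r i = 0"
    and P: "gprod G x n m \<in> Pset G x n"
  shows "gprod G x n r \<otimes> gprod G x n m = gprod G x n (\<lambda>i. r i + m i)"
proof -
  interpret group G by (rule grp)
  let ?D = "derived G (carrier G)"
  interpret N: normal ?D G by (rule derived_self_is_normal)
  interpret Q: comm_group "G Mod ?D" by (rule derived_quot_is_comm_group)
  obtain m' where eq: "gprod G x n m = gprod G x n m'"
    and c: "\<forall>k<n. comm G (gprod G x k m') (x k) = \<one>"
    using P unfolding Pset_def Xset_def by auto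
  have q: "(?D #> gprod G x n (\<lambda>i. m i - m' i)) \<otimes>\<^bsub>G Mod ?D\<^esub> (?D #> gprod G x n m')
     = ?D #> gprod G x n m'"
    using quot_diff[OF gens, of n m m'] eq by simp
  have cl: "\<And>u. u \<in> carrier G \<Longrightarrow> ?D #> u \<in> carrier (G Mod ?D)"
    using N.r_coset_hom_Mod by (auto simp: hom_def)
  have c1: "gprod G x n (\<lambda>i. m i - m' i) \<in> carrier G" "gprod G x n m' \<in> carrier G"
    using gprod_closed[OF gens] by auto
  have "?D #> gprod G x n (\<lambda>i. m i - m' i) = \<one>\<^bsub>G Mod ?D\<^esub>"
    using Q.r_cancel_one[OF cl[OF c1(2)] cl[OF c1(1)]] q by simp
  hence "?D #> gprod G x n (\<lambda>i. m i - m' i) = ?D" by simp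
  hence "gprod G x n (\<lambda>i. m i - m' i) \<in> ?D"
    using rcos_self[OF c1(1) N.subgroup_axioms] by simp
  hence "\<forall>i<n. m i = m' i" using basis by fastforce
  hence e1: "gprod G x n m = gprod G x n m'" and
        e2: "gprod G x n (\<lambda>i. r i + m i) = gprod G x n (\<lambda>i. r i + m' i)"
    by (auto intro: gprod_cong)
  show ?thesis unfolding e1 e2 using main_mult[OF gens c, of n r] by simp
qed

end
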